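(* Let $Q$ be a probability measure on $(\Omega,\mathcal G_\infty)$ equivalent to $P$ such that the density process ${}^{\mathcal G}Z_t=\mathbb E[dQ/dP\mid\mathcal G_t]$ is $\mathbb F$-adapted. Then ${}^{o,Q}M={}^oM$, i.e. $\mathbb E^Q[M_t\mid\mathcal F_t]=\mathbb E^P[M_t\mid\mathcal F_t]$ a.s. for all $t\ge0$.
   Context: $B^1,B^2,B^3$ are independent standard Brownian motions on $(\Omega,\mathcal F,P)$ with $(B^1_0,B^2_0,B^3_0)=(1,0,0)$, and $M_t:=((B^1_t)^2+(B^2_t)^2+(B^3_t)^2)^{-1/2}$ is the inverse three-dimensional Bessel process. $\mathbb G$ is the (augmented) natural filtration of $(B^1,B^2,B^3)$ and $\mathbb F$ is the (augmented) natural filtration of $(B^1,B^2)$. ${}^{o,Q}M_t=\mathbb E^Q[M_t\mid\mathcal F_t]$ and ${}^oM={}^{o,P}M$. *)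

theory Defs
  imports "HOL-Probability.Probability"
begin

definition std_BM :: "'a measure \<Rightarrow> (real \<Rightarrow> 'a \<Rightarrow> real) \<Rightarrow> real \<Rightarrow> bool" where
  "std_BM P B x0 \<longleftrightarrow>
     (\<forall>t\<ge>0. B t \<in> borel_measurable P) \<and>
     (AE \<omega> in P. B 0 \<omega> = x0) \<and>
     (AE \<omega> in P. continuous_on {0..} (\<lambda>t. B t \<omega>)) \<and>
     (\<forall>s t. 0 \<le> s \<longrightarrow> s < t \<longrightarrow>
        distributed P lborel (\<lambda>\<omega>. B t \<omega> - B s \<omega>) (normal_density 0 (sqrt (t - s)))) \<and>
     (\<forall>(n::nat) (ts::nat \<Rightarrow> real). 0 \<le> ts 0 \<longrightarrow> (\<forall>i<n. ts i < ts (Suc i)) \<longrightarrow>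
        prob_space.indep_vars P (\<lambda>_. borel) (\<lambda>i \<omega>. B (ts (Suc i)) \<omega> - B (ts i) \<omega>) {..<n})"

text \<open>With T = {0..t} this is the time-t sigma-algebra of the
  augmented natural filtration; with T = {0..} it is the terminal sigma-algebra.\<close>
definition aug_nat_filtration ::
  "'a measure \<Rightarrow> ('i \<Rightarrow> real \<Rightarrow> 'a \<Rightarrow> real) \<Rightarrow> 'i set \<Rightarrow> real set \<Rightarrow> 'a measure" where
  "aug_nat_filtration P X I T =
     sigma (space P)
       ({X i s -` A \<inter> space P | i s A. i \<in> I \<and> s \<in> T \<and> A \<in> sets (borel :: real measure)}
        \<union> null_sets P)"

end

theory Submission
  imports Defs
begin


lemma abstract_main:
  fixes P Q H Gt Ft :: "'a measure" and Z f :: "'a \<Rightarrow> ennreal"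
  assumes P: "prob_space P" and sPH: "subalgebra P H" and sHG: "subalgebra H Gt"
    and sGF: "subalgebra Gt Ft"
    and Q: "prob_space Q" and spQ: "space Q = space P" and setsQ: "sets Q = sets H"
    and nul: "\<forall>A\<in>sets H. emeasure Q A = 0 \<longleftrightarrow> emeasure P A = 0"
    and Zm: "Z \<in> borel_measurable Ft"
    and ZAE: "AE \<omega> in P. nn_cond_exp P Gt (RN_deriv (restr_to_subalg P H) Q) \<omega> = Z \<omega>"
    and fm: "f \<in> borel_measurable Gt"
  shows "AE \<omega> in P. nn_cond_exp Q Ft f \<omega> = nn_cond_exp P Ft f \<omega>"
proof -
  define R where "R = restr_to_subalg P H"
  define D where "D = RN_deriv R Q"
  have sPG: "subalgebra P Gt" using sPH sHG by (auto simp: subalgebra_def)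
  have sPF: "subalgebra P Ft" using sPG sGF by (auto simp: subalgebra_def)
  have sQF: "subalgebra Q Ft" using sHG sGF spQ setsQ sPH by (auto simp: subalgebra_def)
  interpret P: prob_space P by (rule P)
  interpret Q: prob_space Q by (rule Q)
  interpret PG: finite_measure_subalgebra P Gt by unfold_locales (rule sPG)
  interpret PF: finite_measure_subalgebra P Ft by unfold_locales (rule sPF)
  interpret QF: finite_measure_subalgebra Q Ft by unfold_locales (rule sQF)
  have Rfin: "finite_measure R" unfolding R_def
    using finite_measure_restr_to_subalg[OF sPH] P.finite_emeasure_space by simp
  interpret R: finite_measure R by (rule Rfin)
  have setsR: "sets R = sets H" unfolding R_def by (rule sets_restr_to_subalg[OF sPH])
  have spR: "space R = space P" unfolding R_def by (simp add: space_restr_to_subalg)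
  have ac: "absolutely_continuous R Q"
    unfolding absolutely_continuous_def
  proof
    fix A assume "A \<in> null_sets R"
    then have "A \<in> null_sets P" "A \<in> sets H"
      using null_sets_restr_to_subalg[OF sPH] unfolding R_def by auto
    then show "A \<in> null_sets Q" using nul setsQ by auto
  qed
  have GH: "sets Gt \<subseteq> sets H" using sHG by (simp add: subalgebra_def)
  have FG: "sets Ft \<subseteq> sets Gt" using sGF by (simp add: subalgebra_def)
  have key: "integral\<^sup>N Q g = (\<integral>\<^sup>+x. Z x * g x \<partial>P)" if gm: "g \<in> borel_measurable Gt" for g
  proof -
    have gH: "g \<in> borel_measurable H"
      using gm GH sHG by (metis measurable_from_subalg)
    have gR: "g \<in> borel_measurable R" using gH measurable_cong_sets[OF setsR refl] by blast
    have Dm: "D \<in> borel_measurable H" unfolding D_def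
      using borel_measurable_RN_deriv[of R Q] measurable_cong_sets[OF setsR refl] by blast
    have "integral\<^sup>N Q g = (\<integral>\<^sup>+x. D x * g x \<partial>R)"
      unfolding D_def by (rule R.RN_deriv_nn_integral[OF ac _ gR]) (simp add: setsQ setsR)
    also have "\<dots> = (\<integral>\<^sup>+x. D x * g x \<partial>P)" unfolding R_def
      by (rule nn_integral_subalgebra2[OF sPH]) (use Dm gH in measurable)
    also have "\<dots> = (\<integral>\<^sup>+x. g x * D x \<partial>P)" by (simp add: mult.commute)
    also have "\<dots> = (\<integral>\<^sup>+x. g x * nn_cond_exp P Gt D x \<partial>P)"
      by (rule PG.nn_cond_exp_intg[symmetric]) (use gm Dm sPH in \<open>auto intro: measurable_from_subalg\<close>)
    also have "\<dots> = (\<integral>\<^sup>+x. Z x * g x \<partial>P)"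
      using ZAE unfolding D_def R_def by (intro nn_integral_cong_AE) (auto simp: mult.commute)
    finally show ?thesis .
  qed
  define h where "h = nn_cond_exp P Ft f"
  have hF: "h \<in> borel_measurable Ft" unfolding h_def by simp
  have hG: "h \<in> borel_measurable Gt" using hF sGF by (metis measurable_from_subalg)
  have fP: "f \<in> borel_measurable P" using fm sPG by (metis measurable_from_subalg)
  have "AE x in Q. h x = nn_cond_exp Q Ft f x"
  proof (rule QF.nn_cond_exp_charact)
    fix A assume A: "A \<in> sets Ft"
    have AG: "A \<in> sets Gt" using A FG by auto
    have iF: "(\<lambda>x. Z x * indicator A x) \<in> borel_measurable Ft" using Zm A by measurable
    have "(\<integral>\<^sup>+x\<in>A. f x \<partial>Q) = (\<integral>\<^sup>+x. Z x * (f x * indicator A x) \<partial>P)"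
      by (rule key) (use fm AG in measurable)
    also have "\<dots> = (\<integral>\<^sup>+x. (Z x * indicator A x) * f x \<partial>P)"
      by (simp add: mult_ac)
    also have "\<dots> = (\<integral>\<^sup>+x. (Z x * indicator A x) * h x \<partial>P)"
      unfolding h_def by (rule PF.nn_cond_exp_intg[symmetric, OF iF fP])
    also have "\<dots> = (\<integral>\<^sup>+x. Z x * (h x * indicator A x) \<partial>P)"
      by (simp add: mult_ac)
    also have "\<dots> = (\<integral>\<^sup>+x\<in>A. h x \<partial>Q)"
      by (rule key[symmetric]) (use hG AG in measurable)
    finally show "(\<integral>\<^sup>+x\<in>A. f x \<partial>Q) = (\<integral>\<^sup>+x\<in>A. h x \<partial>Q)" .
  next
    have "f \<in> borel_measurable H" using fm sHG by (metis measurable_from_subalg)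
    then show "f \<in> borel_measurable Q" using measurable_cong_sets[OF setsQ refl] by blast
  next
    show "h \<in> borel_measurable Ft" by (rule hF)
  qed
  then have AEQ: "AE x in Q. nn_cond_exp Q Ft f x = h x" by auto
  define N where "N = {x\<in>space Q. nn_cond_exp Q Ft f x \<noteq> h x}"
  have NF0: "{x\<in>space Ft. nn_cond_exp Q Ft f x \<noteq> h x} \<in> sets Ft" using hF by measurable
  have NF: "N \<in> sets Ft" using NF0 sQF unfolding N_def subalgebra_def by simp
  have NH: "N \<in> sets H" using NF FG GH by auto
  have "emeasure Q N = 0" using AEQ NH setsQ unfolding N_def by (simp add: AE_iff_measurable)
  then have "emeasure P N = 0" using nul NH by auto
  moreover have "N \<in> sets P" using NH sPH by (auto simp: subalgebra_def)
  ultimately have "AE x in P. nn_cond_exp Q Ft f x = h x" using spQ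
    by (intro AE_I[where N=N]) (auto simp: N_def)
  then show ?thesis unfolding h_def .
qed



lemma aug_gen_pow:
  "{X i s -` A \<inter> space P | i s A. i \<in> I \<and> s \<in> T \<and> A \<in> sets (borel :: real measure)}
        \<union> null_sets P \<subseteq> Pow (space P)"
  using sets.sets_into_space by auto

lemma aug_space: "space (aug_nat_filtration P X I T) = space P"
  unfolding aug_nat_filtration_def by (simp add: space_measure_of_conv)

lemma aug_sets: "sets (aug_nat_filtration P X I T) =
   sigma_sets (space P) ({X i s -` A \<inter> space P | i s A. i \<in> I \<and> s \<in> T \<and> A \<in> sets (borel :: real measure)}
        \<union> null_sets P)"
  unfolding aug_nat_filtration_def by (rule sets_measure_of[OF aug_gen_pow])

lemma aug_mono:
  assumes "I \<subseteq> I'" "T \<subseteq> T'"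
  shows "sets (aug_nat_filtration P X I T) \<subseteq> sets (aug_nat_filtration P X I' T')"
  unfolding aug_sets using assms by (intro sigma_sets_mono') blast

lemma aug_sub:
  assumes "\<And>i s. i \<in> I \<Longrightarrow> s \<in> T \<Longrightarrow> X i s \<in> borel_measurable P"
  shows "sets (aug_nat_filtration P X I T) \<subseteq> sets P"
  unfolding aug_sets
proof (rule sets.sigma_sets_subset)
  show "{X i s -` A \<inter> space P | i s A. i \<in> I \<and> s \<in> T \<and> A \<in> sets (borel :: real measure)}
        \<union> null_sets P \<subseteq> sets P"
    using assms by (auto simp: measurable_sets)
qed

lemma aug_meas:
  assumes "i \<in> I" "s \<in> T"
  shows "X i s \<in> borel_measurable (aug_nat_filtration P X I T)"
proof (rule measurableI)
  fix A :: "real set" assume "A \<in> sets borel"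
  then have "X i s -` A \<inter> space P \<in> sets (aug_nat_filtration P X I T)"
    unfolding aug_sets using assms by (intro sigma_sets.Basic) blast
  then show "X i s -` A \<inter> space (aug_nat_filtration P X I T) \<in> sets (aug_nat_filtration P X I T)"
    by (simp add: aug_space)
qed simp

theorem mainTheorem8:
  fixes P Q :: "'a measure" and B1 B2 B3 :: "real \<Rightarrow> 'a \<Rightarrow> real"
  defines "G \<equiv> (\<lambda>t. aug_nat_filtration P (\<lambda>i::nat. if i = 1 then B1 else if i = 2 then B2 else B3) {1,2,3} {0..t})"
    and "F \<equiv> (\<lambda>t. aug_nat_filtration P (\<lambda>i::nat. if i = 1 then B1 else if i = 2 then B2 else B3) {1,2} {0..t})"
    and "M \<equiv> (\<lambda>t \<omega>. 1 / sqrt ((B1 t \<omega>)\<^sup>2 + (B2 t \<omega>)\<^sup>2 + (B3 t \<omega>)\<^sup>2))"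
  assumes "prob_space P"
    and "std_BM P B1 1" and "std_BM P B2 0" and "std_BM P B3 0"
    and "prob_space.indep_vars P (\<lambda>_. PiM {0..} (\<lambda>_. (borel :: real measure)))
           (\<lambda>i \<omega>. \<lambda>t\<in>{0..}. (\<lambda>i::nat. if i = 1 then B1 else if i = 2 then B2 else B3) i t \<omega>) {1,2,3}"
    and "prob_space Q" and "space Q = space P" and "sets Q = sets (aug_nat_filtration P (\<lambda>i::nat. if i = 1 then B1 else if i = 2 then B2 else B3) {1,2,3} {0..})"
    and "\<forall>A\<in>sets (aug_nat_filtration P (\<lambda>i::nat. if i = 1 then B1 else if i = 2 then B2 else B3) {1,2,3} {0..}). emeasure Q A = 0 \<longleftrightarrow> emeasure P A = 0"
    and "\<forall>t\<ge>0. \<exists>Z. Z \<in> borel_measurable (F t) \<and>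
           (AE \<omega> in P. nn_cond_exp P (G t) (RN_deriv (restr_to_subalg P (aug_nat_filtration P (\<lambda>i::nat. if i = 1 then B1 else if i = 2 then B2 else B3) {1,2,3} {0..})) Q) \<omega> = Z \<omega>)"
  shows "\<forall>t\<ge>0. AE \<omega> in P.
           nn_cond_exp Q (F t) (\<lambda>\<omega>. ennreal (M t \<omega>)) \<omega> = nn_cond_exp P (F t) (\<lambda>\<omega>. ennreal (M t \<omega>)) \<omega>"
  proof (intro allI impI)
  fix t :: real assume t: "t \<ge> 0"
  define X where "X = (\<lambda>i::nat. if i = 1 then B1 else if i = 2 then B2 else B3)"
  define H where "H = aug_nat_filtration P X {1,2,3} {0..}"
  have Bm: "X i s \<in> borel_measurable P" if "i \<in> {1,2,3}" "s \<in> {0..}" for i s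
    using that assms(5,6,7) unfolding std_BM_def X_def by auto
  have sPH: "subalgebra P H" unfolding H_def subalgebra_def
    using aug_sub[of "{1,2,3}" "{0..}" X P] Bm by (auto simp: aug_space)
  have sHG: "subalgebra H (G t)" unfolding H_def G_def subalgebra_def X_def[symmetric]
    using aug_mono[of "{1,2,3::nat}" "{1,2,3}" "{0..t}" "{0..}" P X] by (auto simp: aug_space)
  have sGF: "subalgebra (G t) (F t)" unfolding F_def G_def subalgebra_def X_def[symmetric]
    using aug_mono[of "{1,2::nat}" "{1,2,3}" "{0..t}" "{0..t}" P X] by (auto simp: aug_space)
  obtain Z where Z: "Z \<in> borel_measurable (F t)"
    "AE \<omega> in P. nn_cond_exp P (G t) (RN_deriv (restr_to_subalg P H) Q) \<omega> = Z \<omega>"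
    using assms(13) t unfolding H_def X_def by blast
  have m1[measurable]: "B1 t \<in> borel_measurable (G t)"
    using aug_meas[of 1 "{1,2,3}" t "{0..t}" X P] t unfolding G_def X_def by simp
  have m2[measurable]: "B2 t \<in> borel_measurable (G t)"
    using aug_meas[of 2 "{1,2,3}" t "{0..t}" X P] t unfolding G_def X_def by simp
  have m3[measurable]: "B3 t \<in> borel_measurable (G t)"
    using aug_meas[of 3 "{1,2,3}" t "{0..t}" X P] t unfolding G_def X_def by simp
  have fm: "(\<lambda>\<omega>. ennreal (M t \<omega>)) \<in> borel_measurable (G t)"
    unfolding M_def by measurable
  show "AE \<omega> in P. nn_cond_exp Q (F t) (\<lambda>\<omega>. ennreal (M t \<omega>)) \<omega> = nn_cond_exp P (F t) (\<lambda>\<omega>. ennreal (M t \<omega>)) \<omega>"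
    by (rule abstract_main[OF assms(4) sPH sHG sGF assms(9) assms(10) _ _ Z fm])
       (use assms(11) assms(12) in \<open>simp_all add: H_def X_def\<close>)
qed

end
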